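(* Let $R$ be a commutative ring with identity and $a\in R$. Then $a\Gamma_a(R)[x]=a\Gamma_a(R[x])$, where $a\Gamma_a(R)[x]$ denotes the set of polynomials in $R[x]$ all of whose coefficients lie in $a\Gamma_a(R)$, and $a\Gamma_a(R[x])$ is computed with $R[x]$ viewed as a module over itself (equivalently, over $R$).
   Context: For a ring (or module) $S$ containing $a$ acting by multiplication: $\Gamma_{a}(S)=\{s\in S \mid a^{k}s=0 \text{ for some } k\in\mathbb{Z}^{+}\}$ and $a\Gamma_{a}(S)=\{as \mid s\in \Gamma_a(S)\}$. *)

theory Defs
  imports "HOL-Computational_Algebra.Polynomial"
begin

definition Gamma :: "'a::comm_ring_1 \<Rightarrow> 'a set" where
  "Gamma a = {s. \<exists>k::nat. k > 0 \<and> a ^ k * s = 0}"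

definition aGamma :: "'a::comm_ring_1 \<Rightarrow> 'a set" where
  "aGamma a = (\<lambda>s. a * s) ` Gamma a"

definition polys_over :: "'a::zero set \<Rightarrow> 'a poly set" where
  "polys_over A = {p. \<forall>i. coeff p i \<in> A}"

end

theory Submission
  imports Defs
begin

theorem mainTheorem8:
  fixes a :: "'a::comm_ring_1"
  shows "polys_over (aGamma a) = aGamma [:a:]"
proof
  show "aGamma [:a:] \<subseteq> polys_over (aGamma a)"
  proof
    fix p assume "p \<in> aGamma [:a:]"
    then obtain q k where p: "p = [:a:] * q" and k: "k > 0" "[:a:] ^ k * q = 0"
      unfolding aGamma_def Gamma_def by auto
    have "coeff p i \<in> aGamma a" for i
    proof -
      have "coeff ([:a:] ^ k * q) i = 0" using k by simp
      hence "a ^ k * coeff q i = 0" by (simp add: poly_const_pow)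
      hence "coeff q i \<in> Gamma a" using k unfolding Gamma_def by auto
      thus ?thesis using p unfolding aGamma_def by simp
    qed
    thus "p \<in> polys_over (aGamma a)" unfolding polys_over_def by auto
  qed
next
  show "polys_over (aGamma a) \<subseteq> aGamma [:a:]"
  proof
    fix p assume "p \<in> polys_over (aGamma a)"
    hence "\<forall>i. \<exists>s. coeff p i = a * s \<and> (\<exists>k. k > 0 \<and> a ^ k * s = 0)"
      unfolding polys_over_def aGamma_def Gamma_def by (simp add: image_iff) blast
    then obtain s where s: "\<And>i. coeff p i = a * s i" "\<And>i. \<exists>k. k > 0 \<and> a ^ k * s i = 0"
      by metis
    then obtain k where k: "\<And>i. k i > 0" "\<And>i. a ^ k i * s i = 0" by metis
    define n where "n = degree p"
    define q where "q = (\<Sum>i\<le>n. monom (s i) i)"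
    define K where "K = Suc (\<Sum>i\<le>n. k i)"
    have cq: "coeff q j = (if j \<le> n then s j else 0)" for j
      unfolding q_def by (simp add: coeff_sum coeff_monom)
    have "p = [:a:] * q"
    proof (rule poly_eqI)
      fix j
      show "coeff p j = coeff ([:a:] * q) j"
      proof (cases "j \<le> n")
        case True thus ?thesis using s cq by simp
      next
        case False
        hence "coeff p j = 0" unfolding n_def by (simp add: coeff_eq_0)
        thus ?thesis using False cq by simp
      qed
    qed
    moreover have "[:a:] ^ K * q = 0"
    proof (rule poly_eqI)
      fix j
      show "coeff ([:a:] ^ K * q) j = coeff 0 j"
      proof (cases "j \<le> n")
        case True
        have "k j \<le> K" unfolding K_def using True
          by (metis finite_atMost atMost_iff le_SucI member_le_sum zero_le)
        then obtain m where "K = k j + m" using le_Suc_ex by blast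
        hence "a ^ K * s j = a ^ m * (a ^ k j * s j)" by (simp add: power_add ac_simps)
        thus ?thesis using True cq k by (simp add: poly_const_pow)
      next
        case False thus ?thesis using cq by (simp add: poly_const_pow)
      qed
    qed
    ultimately show "p \<in> aGamma [:a:]" unfolding aGamma_def Gamma_def K_def by blast
  qed
qed

end
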